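(* Let $(S,T)$ be bivariate normal with standard normal margins and correlation $\rho\in(-1,1)$, and let $A = \sqrt{2\pi}\,S$, $B = \sqrt{2\pi}\,T$. Then $\mathbb E[\max(A,0)] = \mathbb E[\max(B,0)] = 1$ and for $(x,y)\in[0,\infty)^2$ with $x+y>0$, \[ \mathbb E[\max(xA, yB, 0)] = \frac12(x+y)\Biggl(1 + \sqrt{1 - 2(\rho+1)\frac{xy}{(x+y)^2}}\Biggr). \] Equivalently the Pickands function $D_\rho(t) = \ell_\rho(1-t,t)$ equals $\frac12\{1 + \sqrt{1 - 2(\rho+1)t(1-t)}\}$, $t\in[0,1]$. *)

theory Defs
  imports "HOL-Probability.Probability"
begin

definition binorm_density :: "real \<Rightarrow> real \<times> real \<Rightarrow> real" where
  "binorm_density \<rho> = (\<lambda>(s, t). exp (- (s\<^sup>2 - 2 * \<rho> * s * t + t\<^sup>2) / (2 * (1 - \<rho>\<^sup>2)))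
        / (2 * pi * sqrt (1 - \<rho>\<^sup>2)))"

end

theory Submission
  imports Defs
begin

lemma binorm_factor:
  assumes "-1 < \<rho>" "\<rho> < 1"
  shows "binorm_density \<rho> (s, t) = std_normal_density s * normal_density (\<rho> * s) (sqrt (1 - \<rho>\<^sup>2)) t"
proof -
  have q: "0 < 1 - \<rho>\<^sup>2" using assms by (simp add: abs_square_less_1)
  have e: "- s\<^sup>2 / 2 + - (t - \<rho> * s)\<^sup>2 / (2 * (1 - \<rho>\<^sup>2)) = - (s\<^sup>2 - 2 * \<rho> * s * t + t\<^sup>2) / (2 * (1 - \<rho>\<^sup>2))"
    using q by (simp add: field_simps power2_eq_square)
  have s1: "sqrt (2*pi*(1-\<rho>\<^sup>2)) = sqrt(2*pi) * sqrt(1-\<rho>\<^sup>2)" by (simp add: real_sqrt_mult)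
  have s2: "sqrt(2*pi) * sqrt(2*pi) = 2*pi" by simp
  have c: "1 / sqrt (2 * pi) * (1 / sqrt (2 * pi * (1 - \<rho>\<^sup>2))) = 1 / (2 * pi * sqrt (1 - \<rho>\<^sup>2))"
  proof -
    have "1 / sqrt (2 * pi) * (1 / (sqrt (2 * pi) * sqrt (1 - \<rho>\<^sup>2))) = 1 / ((sqrt (2 * pi) * sqrt (2 * pi)) * sqrt (1 - \<rho>\<^sup>2))"
      by simp
    then show ?thesis unfolding s1 s2 .
  qed
  have "std_normal_density s * normal_density (\<rho> * s) (sqrt (1 - \<rho>\<^sup>2)) t
     = (1 / sqrt (2 * pi) * (1 / sqrt (2 * pi * (1 - \<rho>\<^sup>2)))) * exp (- s\<^sup>2 / 2 + - (t - \<rho> * s)\<^sup>2 / (2 * (1 - \<rho>\<^sup>2)))"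
    unfolding std_normal_density_def normal_density_def using q by (simp add: mult_exp_exp)
  also have "\<dots> = binorm_density \<rho> (s, t)" unfolding c e binorm_density_def by simp
  finally show ?thesis ..
qed

lemma mix:
  assumes "0 < \<tau>"
  shows "(\<integral>\<^sup>+s. ennreal (std_normal_density s * normal_density (c * s) \<tau> w) \<partial>lborel)
       = ennreal (normal_density 0 (sqrt (c\<^sup>2 + \<tau>\<^sup>2)) w)"
proof (cases "c = 0")
  case True
  have "(\<integral>\<^sup>+s. ennreal (std_normal_density s * normal_density (c * s) \<tau> w) \<partial>lborel)
     = (\<integral>\<^sup>+s. ennreal (normal_density 0 \<tau> w) * ennreal (std_normal_density s) \<partial>lborel)"
    using True by (simp add: ennreal_mult' mult.commute)
  also have "\<dots> = ennreal (normal_density 0 \<tau> w) * (\<integral>\<^sup>+s. ennreal (std_normal_density s) \<partial>lborel)"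
    by (rule nn_integral_cmult) simp
  also have "(\<integral>\<^sup>+s. ennreal (std_normal_density s) \<partial>lborel) = 1"
    by (subst nn_integral_eq_integral) auto
  finally show ?thesis using True assms by simp
next
  case False
  have "(\<integral>\<^sup>+s. ennreal (std_normal_density s * normal_density (c * s) \<tau> w) \<partial>lborel)
      = ennreal \<bar>1/c\<bar> * (\<integral>\<^sup>+u. ennreal (std_normal_density (0 + (1/c) * u) * normal_density (c * (0 + (1/c) * u)) \<tau> w) \<partial>lborel)"
    by (rule nn_integral_real_affine) (use False in \<open>auto simp: normal_density_def\<close>)
  also have "\<dots> = (\<integral>\<^sup>+u. ennreal \<bar>1/c\<bar> * ennreal (std_normal_density (0 + (1/c) * u) * normal_density (c * (0 + (1/c) * u)) \<tau> w) \<partial>lborel)"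
    by (rule nn_integral_cmult[symmetric]) (unfold normal_density_def, measurable)
  also have "\<dots> = (\<integral>\<^sup>+u. ennreal (normal_density 0 \<tau> (w - u) * normal_density 0 \<bar>c\<bar> u) \<partial>lborel)"
  proof (intro nn_integral_cong)
    fix u
    have "\<bar>1/c\<bar> * (std_normal_density (0 + (1/c) * u) * normal_density (c * (0 + (1/c) * u)) \<tau> w)
       = normal_density 0 \<tau> (w - u) * normal_density 0 \<bar>c\<bar> u"
    proof -
      have a: "c * (0 + 1/c * u) = u" using False by simp
      have b: "normal_density u \<tau> w = normal_density 0 \<tau> (w - u)"
        unfolding normal_density_def by (simp add: power2_commute)
      have sq: "sqrt (2 * pi * \<bar>c\<bar>\<^sup>2) = sqrt (2 * pi) * \<bar>c\<bar>"
        by (simp add: real_sqrt_mult)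
      have ex: "- (0 + 1 / c * u)\<^sup>2 / 2 = - (u - 0)\<^sup>2 / (2 * \<bar>c\<bar>\<^sup>2)"
        using False by (simp add: power_divide)
      have d: "\<bar>1/c\<bar> * std_normal_density (0 + 1/c * u) = normal_density 0 \<bar>c\<bar> u"
        unfolding normal_density_def sq ex[symmetric] using False
        by (simp add: abs_divide)
      show ?thesis unfolding a b using d by (metis mult.assoc mult.commute)
    qed
    then show "ennreal \<bar>1/c\<bar> * ennreal (std_normal_density (0 + (1/c) * u) * normal_density (c * (0 + (1/c) * u)) \<tau> w)
       = ennreal (normal_density 0 \<tau> (w - u) * normal_density 0 \<bar>c\<bar> u)"
      by (simp add: ennreal_mult'[symmetric])
  qed
  also have "\<dots> = ennreal (normal_density 0 (sqrt (\<tau>\<^sup>2 + \<bar>c\<bar>\<^sup>2)) w)"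
    using conv_normal_density_zero_mean[of \<tau> "\<bar>c\<bar>"] False assms by (simp add: fun_eq_iff)
  finally show ?thesis by (simp add: add.commute)
qed

lemma binorm_measurable[measurable]: "binorm_density \<rho> \<in> borel_measurable (lborel \<Otimes>\<^sub>M lborel)"
  unfolding binorm_density_def by measurable

lemma G:
  assumes "-1 < \<rho>" "\<rho> < 1" and g[measurable]: "g \<in> borel_measurable (lborel \<Otimes>\<^sub>M lborel)"
  shows "(\<integral>\<^sup>+p. ennreal (binorm_density \<rho> p) * g p \<partial>(lborel \<Otimes>\<^sub>M lborel))
     = (\<integral>\<^sup>+s. \<integral>\<^sup>+t. ennreal (std_normal_density s * normal_density (\<rho> * s) (sqrt (1 - \<rho>\<^sup>2)) t) * g (s, t) \<partial>lborel \<partial>lborel)"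
  apply (subst lborel.nn_integral_fst[symmetric])
   apply measurable
  using binorm_factor[OF assms(1,2)] by simp

lemma Lin:
  fixes h :: "real \<Rightarrow> ennreal"
  assumes r: "-1 < \<rho>" "\<rho> < 1" and h[measurable]: "h \<in> borel_measurable borel" and uv: "u \<noteq> 0 \<or> v \<noteq> 0"
  shows "(\<integral>\<^sup>+p. ennreal (binorm_density \<rho> p) * h (u * fst p + v * snd p) \<partial>(lborel \<Otimes>\<^sub>M lborel))
     = (\<integral>\<^sup>+w. ennreal (normal_density 0 (sqrt (u\<^sup>2 + 2 * \<rho> * u * v + v\<^sup>2)) w) * h w \<partial>lborel)"
proof -
  define \<sigma> where "\<sigma> = sqrt (1 - \<rho>\<^sup>2)"
  have q: "0 < 1 - \<rho>\<^sup>2" using r by (simp add: abs_square_less_1)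
  then have sp: "0 < \<sigma>" unfolding \<sigma>_def by simp
  have ss: "\<sigma>\<^sup>2 = 1 - \<rho>\<^sup>2" unfolding \<sigma>_def using q by simp
  have "(\<integral>\<^sup>+p. ennreal (binorm_density \<rho> p) * h (u * fst p + v * snd p) \<partial>(lborel \<Otimes>\<^sub>M lborel))
     = (\<integral>\<^sup>+s. \<integral>\<^sup>+t. ennreal (std_normal_density s * normal_density (\<rho> * s) \<sigma> t) * h (u * s + v * t) \<partial>lborel \<partial>lborel)"
    unfolding \<sigma>_def by (subst G[OF r]) simp_all
  also have "\<dots> = (\<integral>\<^sup>+w. ennreal (normal_density 0 (sqrt (u\<^sup>2 + 2 * \<rho> * u * v + v\<^sup>2)) w) * h w \<partial>lborel)"
  proof (cases "v = 0")
    case True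
    then have u: "u \<noteq> 0" using uv by simp
    have "(\<integral>\<^sup>+s. \<integral>\<^sup>+t. ennreal (std_normal_density s * normal_density (\<rho> * s) \<sigma> t) * h (u * s + v * t) \<partial>lborel \<partial>lborel)
       = (\<integral>\<^sup>+s. ennreal (std_normal_density s) * h (u * s) \<partial>lborel)"
    proof (intro nn_integral_cong)
      fix s
      have "(\<integral>\<^sup>+t. ennreal (std_normal_density s * normal_density (\<rho> * s) \<sigma> t) * h (u * s + v * t) \<partial>lborel)
         = (\<integral>\<^sup>+t. (ennreal (std_normal_density s) * h (u * s)) * ennreal (normal_density (\<rho> * s) \<sigma> t) \<partial>lborel)"
        using True by (intro nn_integral_cong) (simp add: ennreal_mult' mult_ac)
      also have "\<dots> = (ennreal (std_normal_density s) * h (u * s)) * (\<integral>\<^sup>+t. ennreal (normal_density (\<rho> * s) \<sigma> t) \<partial>lborel)"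
        by (rule nn_integral_cmult) simp
      also have "(\<integral>\<^sup>+t. ennreal (normal_density (\<rho> * s) \<sigma> t) \<partial>lborel) = 1"
        using sp by (subst nn_integral_eq_integral) auto
      finally show "(\<integral>\<^sup>+t. ennreal (std_normal_density s * normal_density (\<rho> * s) \<sigma> t) * h (u * s + v * t) \<partial>lborel)
         = ennreal (std_normal_density s) * h (u * s)" by simp
    qed
    also have "\<dots> = ennreal \<bar>1/u\<bar> * (\<integral>\<^sup>+w. ennreal (std_normal_density (0 + (1/u) * w)) * h (u * (0 + (1/u) * w)) \<partial>lborel)"
      by (rule nn_integral_real_affine) (use u in auto)
    also have "\<dots> = (\<integral>\<^sup>+w. ennreal \<bar>1/u\<bar> * (ennreal (std_normal_density (0 + (1/u) * w)) * h (u * (0 + (1/u) * w))) \<partial>lborel)"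
      by (rule nn_integral_cmult[symmetric]) measurable
    also have "\<dots> = (\<integral>\<^sup>+w. ennreal (normal_density 0 (sqrt (u\<^sup>2 + 2 * \<rho> * u * v + v\<^sup>2)) w) * h w \<partial>lborel)"
    proof (intro nn_integral_cong)
      fix w
      have sq: "sqrt (2 * pi * \<bar>u\<bar>\<^sup>2) = sqrt (2 * pi) * \<bar>u\<bar>"
        by (simp add: real_sqrt_mult)
      have ex: "- (0 + 1 / u * w)\<^sup>2 / 2 = - (w - 0)\<^sup>2 / (2 * \<bar>u\<bar>\<^sup>2)"
        using u by (simp add: power_divide)
      have d: "\<bar>1/u\<bar> * std_normal_density (0 + 1/u * w) = normal_density 0 \<bar>u\<bar> w"
        unfolding normal_density_def sq ex[symmetric] using u
        by (simp add: abs_divide)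
      have "sqrt (u\<^sup>2 + 2 * \<rho> * u * v + v\<^sup>2) = \<bar>u\<bar>" using True by simp
      then show "ennreal \<bar>1/u\<bar> * (ennreal (std_normal_density (0 + (1/u) * w)) * h (u * (0 + (1/u) * w)))
         = ennreal (normal_density 0 (sqrt (u\<^sup>2 + 2 * \<rho> * u * v + v\<^sup>2)) w) * h w"
        using u d by (simp add: ennreal_mult'[symmetric] mult.assoc[symmetric])
    qed
    finally show ?thesis .
  next
    case False
    define c where "c = u + v * \<rho>"
    define \<tau> where "\<tau> = \<bar>v\<bar> * \<sigma>"
    have tp: "0 < \<tau>" unfolding \<tau>_def using False sp by simp
    have "(\<integral>\<^sup>+s. \<integral>\<^sup>+t. ennreal (std_normal_density s * normal_density (\<rho> * s) \<sigma> t) * h (u * s + v * t) \<partial>lborel \<partial>lborel)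
       = (\<integral>\<^sup>+s. \<integral>\<^sup>+w. ennreal (std_normal_density s * normal_density (c * s) \<tau> w) * h w \<partial>lborel \<partial>lborel)"
    proof (rule nn_integral_cong)
      fix s
      have "(\<integral>\<^sup>+t. ennreal (std_normal_density s * normal_density (\<rho> * s) \<sigma> t) * h (u * s + v * t) \<partial>lborel)
         = ennreal \<bar>1/v\<bar> * (\<integral>\<^sup>+w. ennreal (std_normal_density s * normal_density (\<rho> * s) \<sigma> (- u * s / v + (1/v) * w)) * h (u * s + v * (- u * s / v + (1/v) * w)) \<partial>lborel)"
        by (rule nn_integral_real_affine) (use False in \<open>auto simp: normal_density_def\<close>)
      also have "\<dots> = (\<integral>\<^sup>+w. ennreal \<bar>1/v\<bar> * (ennreal (std_normal_density s * normal_density (\<rho> * s) \<sigma> (- u * s / v + (1/v) * w)) * h (u * s + v * (- u * s / v + (1/v) * w))) \<partial>lborel)"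
        by (rule nn_integral_cmult[symmetric]) (unfold normal_density_def, measurable)
      also have "\<dots> = (\<integral>\<^sup>+w. ennreal (std_normal_density s * normal_density (c * s) \<tau> w) * h w \<partial>lborel)"
      proof (intro nn_integral_cong)
        fix w
        have a: "u * s + v * (- u * s / v + (1/v) * w) = w" using False by (simp add: field_simps)
        have sq: "sqrt (2 * pi * \<tau>\<^sup>2) = sqrt (2 * pi * \<sigma>\<^sup>2) * \<bar>v\<bar>"
          unfolding \<tau>_def by (simp add: real_sqrt_mult power_mult_distrib)
        have ex: "(w / v - u * s / v - \<rho> * s)\<^sup>2 / (2 * \<sigma>\<^sup>2) = (w - c * s)\<^sup>2 / (2 * \<tau>\<^sup>2)"
          unfolding \<tau>_def c_def using False sp by (simp add: field_simps power2_eq_square)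
        have d: "\<bar>1/v\<bar> * normal_density (\<rho> * s) \<sigma> (- u * s / v + (1/v) * w) = normal_density (c * s) \<tau> w"
          unfolding normal_density_def sq using False
          by (simp add: abs_divide ex)
        show "ennreal \<bar>1/v\<bar> * (ennreal (std_normal_density s * normal_density (\<rho> * s) \<sigma> (- u * s / v + (1/v) * w)) * h (u * s + v * (- u * s / v + (1/v) * w)))
          = ennreal (std_normal_density s * normal_density (c * s) \<tau> w) * h w"
        proof -
          have e1: "\<bar>1/v\<bar> * (std_normal_density s * normal_density (\<rho> * s) \<sigma> (- u * s / v + (1/v) * w)) = std_normal_density s * normal_density (c * s) \<tau> w"
            using d by (metis mult.left_commute)
          have "ennreal \<bar>1/v\<bar> * ennreal (std_normal_density s * normal_density (\<rho> * s) \<sigma> (- u * s / v + (1/v) * w)) = ennreal (std_normal_density s * normal_density (c * s) \<tau> w)"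
            by (subst ennreal_mult'[symmetric], simp, rule arg_cong[where f=ennreal], rule e1)
          then show ?thesis unfolding a by (metis mult.assoc)
        qed
      qed
      finally show "(\<integral>\<^sup>+t. ennreal (std_normal_density s * normal_density (\<rho> * s) \<sigma> t) * h (u * s + v * t) \<partial>lborel)
         = (\<integral>\<^sup>+w. ennreal (std_normal_density s * normal_density (c * s) \<tau> w) * h w \<partial>lborel)" .
    qed
    also have "\<dots> = (\<integral>\<^sup>+w. \<integral>\<^sup>+s. ennreal (std_normal_density s * normal_density (c * s) \<tau> w) * h w \<partial>lborel \<partial>lborel)"
      by (rule lborel_pair.Fubini'[symmetric]) (unfold normal_density_def, measurable)
    also have "\<dots> = (\<integral>\<^sup>+w. (\<integral>\<^sup>+s. ennreal (std_normal_density s * normal_density (c * s) \<tau> w) \<partial>lborel) * h w \<partial>lborel)"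
      by (intro nn_integral_cong nn_integral_multc) (unfold normal_density_def, measurable)
    also have "\<dots> = (\<integral>\<^sup>+w. ennreal (normal_density 0 (sqrt (c\<^sup>2 + \<tau>\<^sup>2)) w) * h w \<partial>lborel)"
      using mix[OF tp] by simp
    also have "c\<^sup>2 + \<tau>\<^sup>2 = u\<^sup>2 + 2 * \<rho> * u * v + v\<^sup>2"
      unfolding c_def \<tau>_def power_mult_distrib ss by (simp add: power2_eq_square algebra_simps)
    finally show ?thesis .
  qed
  finally show ?thesis .
qed

lemma neg_lborel:
  fixes F :: "real \<Rightarrow> ennreal"
  assumes [measurable]: "F \<in> borel_measurable borel"
  shows "(\<integral>\<^sup>+x. F (- x) \<partial>lborel) = (\<integral>\<^sup>+x. F x \<partial>lborel)"
  using nn_integral_real_affine[of F "-1" 0] by simp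

lemma Sym:
  assumes r: "-1 < \<rho>" "\<rho> < 1" and g[measurable]: "g \<in> borel_measurable (lborel \<Otimes>\<^sub>M lborel)"
  shows "(\<integral>\<^sup>+p. ennreal (binorm_density \<rho> p) * g (- fst p, - snd p) \<partial>(lborel \<Otimes>\<^sub>M lborel))
       = (\<integral>\<^sup>+p. ennreal (binorm_density \<rho> p) * g p \<partial>(lborel \<Otimes>\<^sub>M lborel))"
proof -
  define \<sigma> where "\<sigma> = sqrt (1 - \<rho>\<^sup>2)"
  define K where "K = (\<lambda>s. \<integral>\<^sup>+t. ennreal (std_normal_density s * normal_density (\<rho> * s) \<sigma> t) * g (s, t) \<partial>lborel)"
  have Km[measurable]: "K \<in> borel_measurable borel"
  proof -
    have "(\<lambda>s. \<integral>\<^sup>+t. ennreal (std_normal_density s * normal_density (\<rho> * s) \<sigma> t) * g (s, t) \<partial>lborel) \<in> borel_measurable lborel"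
      by (rule lborel.borel_measurable_nn_integral_fst[of "\<lambda>(s,t). ennreal (std_normal_density s * normal_density (\<rho> * s) \<sigma> t) * g (s, t)", simplified])
         (unfold normal_density_def, measurable)
    then show ?thesis unfolding K_def by simp
  qed
  have gm: "(\<lambda>p. g (- fst p, - snd p)) \<in> borel_measurable (lborel \<Otimes>\<^sub>M lborel)" by measurable
  have "(\<integral>\<^sup>+p. ennreal (binorm_density \<rho> p) * g (- fst p, - snd p) \<partial>(lborel \<Otimes>\<^sub>M lborel))
     = (\<integral>\<^sup>+s. \<integral>\<^sup>+t. ennreal (std_normal_density s * normal_density (\<rho> * s) \<sigma> t) * g (- s, - t) \<partial>lborel \<partial>lborel)"
    unfolding \<sigma>_def using G[OF r gm] by simp
  also have "\<dots> = (\<integral>\<^sup>+s. K (- s) \<partial>lborel)"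
  proof (rule nn_integral_cong)
    fix s
    have "(\<integral>\<^sup>+t. ennreal (std_normal_density s * normal_density (\<rho> * s) \<sigma> t) * g (- s, - t) \<partial>lborel)
       = (\<integral>\<^sup>+t. ennreal (std_normal_density s * normal_density (\<rho> * s) \<sigma> (- t)) * g (- s, - (- t)) \<partial>lborel)"
      by (rule neg_lborel[symmetric, of "\<lambda>t. ennreal (std_normal_density s * normal_density (\<rho> * s) \<sigma> t) * g (- s, - t)"])
         (unfold normal_density_def, measurable)
    also have "\<dots> = K (- s)" unfolding K_def
    proof (intro nn_integral_cong)
      fix x
      have "(- x - \<rho> * s)\<^sup>2 = (x + \<rho> * s)\<^sup>2" by (simp add: power2_eq_square algebra_simps)
      then show "ennreal (std_normal_density s * normal_density (\<rho> * s) \<sigma> (- x)) * g (- s, - (- x)) =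
          ennreal (std_normal_density (- s) * normal_density (\<rho> * - s) \<sigma> x) * g (- s, x)"
        by (simp add: normal_density_def)
    qed
    finally show "(\<integral>\<^sup>+t. ennreal (std_normal_density s * normal_density (\<rho> * s) \<sigma> t) * g (- s, - t) \<partial>lborel) = K (- s)" .
  qed
  also have "\<dots> = (\<integral>\<^sup>+s. K s \<partial>lborel)" by (rule neg_lborel) simp
  also have "\<dots> = (\<integral>\<^sup>+p. ennreal (binorm_density \<rho> p) * g p \<partial>(lborel \<Otimes>\<^sub>M lborel))"
    unfolding K_def \<sigma>_def using G[OF r g] by simp
  finally show ?thesis .
qed

lemma AbsLin:
  assumes r: "-1 < \<rho>" "\<rho> < 1"
  shows "(\<integral>\<^sup>+p. ennreal (binorm_density \<rho> p) * ennreal \<bar>u * fst p + v * snd p\<bar> \<partial>(lborel \<Otimes>\<^sub>M lborel))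
     = ennreal (sqrt (u\<^sup>2 + 2 * \<rho> * u * v + v\<^sup>2) * sqrt (2 / pi))"
proof (cases "u = 0 \<and> v = 0")
  case True then show ?thesis by simp
next
  case False
  define \<tau> where "\<tau> = sqrt (u\<^sup>2 + 2 * \<rho> * u * v + v\<^sup>2)"
  have q: "0 < 1 - \<rho>\<^sup>2" using r by (simp add: abs_square_less_1)
  have "u\<^sup>2 + 2 * \<rho> * u * v + v\<^sup>2 = (u + \<rho> * v)\<^sup>2 + (1 - \<rho>\<^sup>2) * v\<^sup>2"
    by (simp add: power2_eq_square algebra_simps)
  also have "\<dots> > 0"
  proof (cases "v = 0")
    case True then show ?thesis using False by simp
  next
    case False then show ?thesis using q by (intro add_nonneg_pos) simp_all
  qed
  finally have tp: "0 < \<tau>" unfolding \<tau>_def by simp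
  have "(\<integral>\<^sup>+p. ennreal (binorm_density \<rho> p) * ennreal \<bar>u * fst p + v * snd p\<bar> \<partial>(lborel \<Otimes>\<^sub>M lborel))
      = (\<integral>\<^sup>+w. ennreal (normal_density 0 \<tau> w) * ennreal \<bar>w\<bar> \<partial>lborel)"
    unfolding \<tau>_def by (rule Lin[OF r, of "\<lambda>w. ennreal \<bar>w\<bar>"]) (use False in auto)
  also have "\<dots> = (\<integral>\<^sup>+w. ennreal (normal_density 0 \<tau> w * \<bar>w\<bar>) \<partial>lborel)"
    by (intro nn_integral_cong) (simp add: ennreal_mult')
  also have "\<dots> = ennreal (\<tau> * sqrt (2 / pi))"
  proof -
    have hb: "has_bochner_integral lborel (\<lambda>w. normal_density 0 \<tau> w * \<bar>w\<bar>) (\<tau> * sqrt (2 / pi))"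
      using normal_moment_abs_odd[OF tp, of 0 0] by simp
    show ?thesis
      by (subst nn_integral_eq_integral)
         (simp_all add: integrable.intros[OF hb] has_bochner_integral_integral_eq[OF hb] tp)
  qed
  finally show ?thesis unfolding \<tau>_def by simp
qed

lemma max_identity:
  fixes a b :: real
  shows "max (max a b) 0 + max (max (- a) (- b)) 0 = \<bar>a / 2\<bar> + \<bar>b / 2\<bar> + \<bar>a / 2 - b / 2\<bar>"
  by (auto simp: max_def abs_if)

lemma Core:
  assumes r: "-1 < \<rho>" "\<rho> < 1" and xy: "0 \<le> x" "0 \<le> y"
  shows "(\<integral>\<^sup>+p. ennreal (binorm_density \<rho> p) * ennreal (max (max (x * (sqrt (2 * pi) * fst p)) (y * (sqrt (2 * pi) * snd p))) 0) \<partial>(lborel \<Otimes>\<^sub>M lborel))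
     = ennreal ((x + y + sqrt (x\<^sup>2 - 2 * \<rho> * x * y + y\<^sup>2)) / 2)"
proof -
  have Qnn: "0 \<le> x\<^sup>2 - 2 * \<rho> * x * y + y\<^sup>2"
  proof -
    have "x\<^sup>2 - 2 * \<rho> * x * y + y\<^sup>2 = (x - \<rho> * y)\<^sup>2 + (1 - \<rho>\<^sup>2) * y\<^sup>2"
      by (simp add: power2_eq_square algebra_simps)
    moreover have "0 \<le> 1 - \<rho>\<^sup>2" using r by (simp add: abs_square_le_1)
    ultimately show ?thesis by simp
  qed
  define c where "c = sqrt (2 * pi)"
  define f where "f = (\<lambda>p::real\<times>real. max (max (x * (c * fst p)) (y * (c * snd p))) 0)"
  define \<alpha> where "\<alpha> = x * c / 2"
  define \<beta> where "\<beta> = y * c / 2"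
  define B where "B = (\<lambda>p. ennreal (binorm_density \<rho> p))"
  have Bm[measurable]: "B \<in> borel_measurable (lborel \<Otimes>\<^sub>M lborel)" unfolding B_def by measurable
  have fm[measurable]: "f \<in> borel_measurable (lborel \<Otimes>\<^sub>M lborel)" unfolding f_def by measurable
  define I where "I = (\<integral>\<^sup>+p. B p * ennreal (f p) \<partial>(lborel \<Otimes>\<^sub>M lborel))"
  have Ineg: "(\<integral>\<^sup>+p. B p * ennreal (f (- fst p, - snd p)) \<partial>(lborel \<Otimes>\<^sub>M lborel)) = I"
    unfolding I_def B_def by (rule Sym[OF r, of "\<lambda>p. ennreal (f p)"]) simp
  have pw: "B p * ennreal (f p) + B p * ennreal (f (- fst p, - snd p))
      = (B p * ennreal \<bar>\<alpha> * fst p + 0 * snd p\<bar> + B p * ennreal \<bar>0 * fst p + \<beta> * snd p\<bar>) + B p * ennreal \<bar>\<alpha> * fst p + (- \<beta>) * snd p\<bar>" for p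
  proof -
    have "f p + f (- fst p, - snd p) = \<bar>\<alpha> * fst p + 0 * snd p\<bar> + \<bar>0 * fst p + \<beta> * snd p\<bar> + \<bar>\<alpha> * fst p + (- \<beta>) * snd p\<bar>"
      using max_identity[of "x * (c * fst p)" "y * (c * snd p)"]
      unfolding f_def \<alpha>_def \<beta>_def by (simp add: algebra_simps)
    then have "ennreal (f p) + ennreal (f (- fst p, - snd p)) = ennreal \<bar>\<alpha> * fst p + 0 * snd p\<bar> + ennreal \<bar>0 * fst p + \<beta> * snd p\<bar> + ennreal \<bar>\<alpha> * fst p + (- \<beta>) * snd p\<bar>"
    proof -
      assume h: "f p + f (- fst p, - snd p) = \<bar>\<alpha> * fst p + 0 * snd p\<bar> + \<bar>0 * fst p + \<beta> * snd p\<bar> + \<bar>\<alpha> * fst p + (- \<beta>) * snd p\<bar>"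
      have "ennreal (f p) + ennreal (f (- fst p, - snd p)) = ennreal (f p + f (- fst p, - snd p))"
        by (rule ennreal_plus[symmetric]) (simp_all add: f_def)
      also have "\<dots> = ennreal (\<bar>\<alpha> * fst p + 0 * snd p\<bar> + \<bar>0 * fst p + \<beta> * snd p\<bar> + \<bar>\<alpha> * fst p + (- \<beta>) * snd p\<bar>)"
        unfolding h ..
      also have "\<dots> = ennreal \<bar>\<alpha> * fst p + 0 * snd p\<bar> + ennreal \<bar>0 * fst p + \<beta> * snd p\<bar> + ennreal \<bar>\<alpha> * fst p + (- \<beta>) * snd p\<bar>"
        by (simp only: ennreal_plus abs_ge_zero add_nonneg_nonneg)
      finally show ?thesis .
    qed
    then show ?thesis by (simp add: distrib_left[symmetric])
  qed
  have "I + I = (\<integral>\<^sup>+p. B p * ennreal (f p) + B p * ennreal (f (- fst p, - snd p)) \<partial>(lborel \<Otimes>\<^sub>M lborel))"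
    unfolding I_def by (subst nn_integral_add) (simp_all add: Ineg[unfolded I_def])
  also have "\<dots> = (\<integral>\<^sup>+p. (B p * ennreal \<bar>\<alpha> * fst p + 0 * snd p\<bar> + B p * ennreal \<bar>0 * fst p + \<beta> * snd p\<bar>) + B p * ennreal \<bar>\<alpha> * fst p + (- \<beta>) * snd p\<bar> \<partial>(lborel \<Otimes>\<^sub>M lborel))"
    using pw by simp
  also have "\<dots> = ((\<integral>\<^sup>+p. B p * ennreal \<bar>\<alpha> * fst p + 0 * snd p\<bar> \<partial>(lborel \<Otimes>\<^sub>M lborel)) + (\<integral>\<^sup>+p. B p * ennreal \<bar>0 * fst p + \<beta> * snd p\<bar> \<partial>(lborel \<Otimes>\<^sub>M lborel)))
      + (\<integral>\<^sup>+p. B p * ennreal \<bar>\<alpha> * fst p + (- \<beta>) * snd p\<bar> \<partial>(lborel \<Otimes>\<^sub>M lborel))"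
    by (subst nn_integral_add, measurable, subst nn_integral_add, measurable)
  also have "\<dots> = (ennreal (sqrt (\<alpha>\<^sup>2 + 2 * \<rho> * \<alpha> * 0 + 0\<^sup>2) * sqrt (2 / pi)) + ennreal (sqrt (0\<^sup>2 + 2 * \<rho> * 0 * \<beta> + \<beta>\<^sup>2) * sqrt (2 / pi)))
       + ennreal (sqrt (\<alpha>\<^sup>2 + 2 * \<rho> * \<alpha> * (- \<beta>) + (- \<beta>)\<^sup>2) * sqrt (2 / pi))"
    unfolding B_def AbsLin[OF r] by (rule refl)
  also have "\<dots> = ennreal (x + y + sqrt (x\<^sup>2 - 2 * \<rho> * x * y + y\<^sup>2))"
  proof -
    have cp: "0 < c" unfolding c_def by simp
    have ck: "c * sqrt (2 / pi) = 2" unfolding c_def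
      by (simp add: real_sqrt_mult[symmetric])
    have e1: "sqrt (\<alpha>\<^sup>2 + 2 * \<rho> * \<alpha> * 0 + 0\<^sup>2) * sqrt (2 / pi) = x"
      unfolding \<alpha>_def using xy cp ck by (simp add: abs_mult)
    have e2: "sqrt (0\<^sup>2 + 2 * \<rho> * 0 * \<beta> + \<beta>\<^sup>2) * sqrt (2 / pi) = y"
      unfolding \<beta>_def using xy cp ck by (simp add: abs_mult)
    have "\<alpha>\<^sup>2 + 2 * \<rho> * \<alpha> * (- \<beta>) + (- \<beta>)\<^sup>2 = (c / 2)\<^sup>2 * (x\<^sup>2 - 2 * \<rho> * x * y + y\<^sup>2)"
      unfolding \<alpha>_def \<beta>_def by (simp add: power2_eq_square algebra_simps)
    then have e3: "sqrt (\<alpha>\<^sup>2 + 2 * \<rho> * \<alpha> * (- \<beta>) + (- \<beta>)\<^sup>2) * sqrt (2 / pi) = sqrt (x\<^sup>2 - 2 * \<rho> * x * y + y\<^sup>2)"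
      using cp ck by (simp add: real_sqrt_mult)
    show ?thesis unfolding e1 e2 e3 using xy Qnn by (simp add: ennreal_plus[symmetric] del: ennreal_plus)
  qed
  finally have II: "I + I = ennreal (x + y + sqrt (x\<^sup>2 - 2 * \<rho> * x * y + y\<^sup>2))" .
  then have "I \<noteq> \<top>" by (cases "I = \<top>") auto
  then obtain i where i: "I = ennreal i" "0 \<le> i" by (cases I) auto
  have Q: "0 \<le> x + y + sqrt (x\<^sup>2 - 2 * \<rho> * x * y + y\<^sup>2)" using xy Qnn by simp
  from II i have "ennreal (i + i) = ennreal (x + y + sqrt (x\<^sup>2 - 2 * \<rho> * x * y + y\<^sup>2))"
    by (simp add: ennreal_plus[symmetric] del: ennreal_plus)
  then have "i + i = x + y + sqrt (x\<^sup>2 - 2 * \<rho> * x * y + y\<^sup>2)" using i Q by simp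
  then have "I = ennreal ((x + y + sqrt (x\<^sup>2 - 2 * \<rho> * x * y + y\<^sup>2)) / 2)" using i by simp
  then show ?thesis unfolding I_def B_def f_def c_def .
qed

theorem mainTheorem10:
  fixes M :: "'a measure" and S T :: "'a \<Rightarrow> real" and \<rho> :: real
  assumes "prob_space M"
    and "-1 < \<rho>" and "\<rho> < 1"
    and "distributed M (lborel \<Otimes>\<^sub>M lborel) (\<lambda>\<omega>. (S \<omega>, T \<omega>))
           (\<lambda>p. ennreal (binorm_density \<rho> p))"
  defines "A \<equiv> (\<lambda>\<omega>. sqrt (2 * pi) * S \<omega>)"
    and "B \<equiv> (\<lambda>\<omega>. sqrt (2 * pi) * T \<omega>)"
  shows "integrable M (\<lambda>\<omega>. max (A \<omega>) 0) \<and> (\<integral>\<omega>. max (A \<omega>) 0 \<partial>M) = 1 \<and>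
         integrable M (\<lambda>\<omega>. max (B \<omega>) 0) \<and> (\<integral>\<omega>. max (B \<omega>) 0 \<partial>M) = 1 \<and>
         (\<forall>x y. 0 \<le> x \<longrightarrow> 0 \<le> y \<longrightarrow> 0 < x + y \<longrightarrow>
           integrable M (\<lambda>\<omega>. max (max (x * A \<omega>) (y * B \<omega>)) 0) \<and>
           (\<integral>\<omega>. max (max (x * A \<omega>) (y * B \<omega>)) 0 \<partial>M)
             = (1/2) * (x + y) * (1 + sqrt (1 - 2 * (\<rho> + 1) * (x * y) / (x + y)\<^sup>2)))"
proof -
  note r = assms(2,3)
  note dist = assms(4)
  have Xm: "(\<lambda>\<omega>. (S \<omega>, T \<omega>)) \<in> measurable M (lborel \<Otimes>\<^sub>M lborel)"
    using distributed_measurable[OF dist] .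
  have Sm[measurable]: "S \<in> borel_measurable M"
  proof -
    have "(\<lambda>\<omega>. fst (S \<omega>, T \<omega>)) \<in> borel_measurable M"
      by (rule measurable_compose[OF Xm]) measurable
    then show ?thesis by simp
  qed
  have Tm[measurable]: "T \<in> borel_measurable M"
  proof -
    have "(\<lambda>\<omega>. snd (S \<omega>, T \<omega>)) \<in> borel_measurable M"
      by (rule measurable_compose[OF Xm]) measurable
    then show ?thesis by simp
  qed
  have gen: "integrable M (\<lambda>\<omega>. max (max (x * A \<omega>) (y * B \<omega>)) 0) \<and>
           (\<integral>\<omega>. max (max (x * A \<omega>) (y * B \<omega>)) 0 \<partial>M) = (x + y + sqrt (x\<^sup>2 - 2 * \<rho> * x * y + y\<^sup>2)) / 2"
    if xy: "0 \<le> x" "0 \<le> y" for x y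
  proof -
    have Qnn: "0 \<le> x\<^sup>2 - 2 * \<rho> * x * y + y\<^sup>2"
    proof -
      have "x\<^sup>2 - 2 * \<rho> * x * y + y\<^sup>2 = (x - \<rho> * y)\<^sup>2 + (1 - \<rho>\<^sup>2) * y\<^sup>2"
        by (simp add: power2_eq_square algebra_simps)
      moreover have "0 \<le> 1 - \<rho>\<^sup>2" using r by (simp add: abs_square_le_1)
      ultimately show ?thesis by simp
    qed
    have Rnn: "0 \<le> (x + y + sqrt (x\<^sup>2 - 2 * \<rho> * x * y + y\<^sup>2)) / 2" using xy Qnn by simp
    have fm: "(\<lambda>\<omega>. max (max (x * A \<omega>) (y * B \<omega>)) 0) \<in> borel_measurable M"
      unfolding A_def B_def by measurable
    have nn: "(\<integral>\<^sup>+\<omega>. ennreal (max (max (x * A \<omega>) (y * B \<omega>)) 0) \<partial>M)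
        = ennreal ((x + y + sqrt (x\<^sup>2 - 2 * \<rho> * x * y + y\<^sup>2)) / 2)"
      using distributed_nn_integral[OF dist, of "\<lambda>p. ennreal (max (max (x * (sqrt (2 * pi) * fst p)) (y * (sqrt (2 * pi) * snd p))) 0)"]
        Core[OF r xy]
      unfolding A_def B_def by simp
    have int: "integrable M (\<lambda>\<omega>. max (max (x * A \<omega>) (y * B \<omega>)) 0)"
      by (rule integrableI_nonneg[OF fm]) (simp, subst nn, simp)
    have "(\<integral>\<omega>. max (max (x * A \<omega>) (y * B \<omega>)) 0 \<partial>M) = (x + y + sqrt (x\<^sup>2 - 2 * \<rho> * x * y + y\<^sup>2)) / 2"
      by (subst integral_eq_nn_integral[OF fm], simp, subst nn, subst enn2real_ennreal[OF Rnn], rule refl)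
    with int show ?thesis by simp
  qed
  have a1: "(\<lambda>\<omega>. max (A \<omega>) 0) = (\<lambda>\<omega>. max (max (1 * A \<omega>) (0 * B \<omega>)) 0)"
    by (auto simp: fun_eq_iff max_def)
  have b1: "(\<lambda>\<omega>. max (B \<omega>) 0) = (\<lambda>\<omega>. max (max (0 * A \<omega>) (1 * B \<omega>)) 0)"
    by (auto simp: fun_eq_iff max_def)
  have part3: "integrable M (\<lambda>\<omega>. max (max (x * A \<omega>) (y * B \<omega>)) 0) \<and>
           (\<integral>\<omega>. max (max (x * A \<omega>) (y * B \<omega>)) 0 \<partial>M)
             = (1/2) * (x + y) * (1 + sqrt (1 - 2 * (\<rho> + 1) * (x * y) / (x + y)\<^sup>2))"
    if xy: "0 \<le> x" "0 \<le> y" "0 < x + y" for x y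
  proof -
    have "1 - 2 * (\<rho> + 1) * (x * y) / (x + y)\<^sup>2 = (x\<^sup>2 - 2 * \<rho> * x * y + y\<^sup>2) / (x + y)\<^sup>2"
    proof -
      have D: "(x + y)\<^sup>2 \<noteq> 0" using xy by simp
      have eqN: "x\<^sup>2 - 2 * \<rho> * x * y + y\<^sup>2 = (x + y)\<^sup>2 - 2 * (\<rho> + 1) * (x * y)"
        by (simp add: power2_eq_square algebra_simps)
      show ?thesis unfolding eqN using xy by (simp add: diff_divide_distrib D)
    qed
    then have "sqrt (1 - 2 * (\<rho> + 1) * (x * y) / (x + y)\<^sup>2) = sqrt (x\<^sup>2 - 2 * \<rho> * x * y + y\<^sup>2) / (x + y)"
      using xy by (simp add: real_sqrt_divide)
    then have "(1/2) * (x + y) * (1 + sqrt (1 - 2 * (\<rho> + 1) * (x * y) / (x + y)\<^sup>2)) = (x + y + sqrt (x\<^sup>2 - 2 * \<rho> * x * y + y\<^sup>2)) / 2"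
      using xy by (simp add: field_simps)
    then show ?thesis using gen[OF xy(1,2)] by simp
  qed
  show ?thesis
    using gen[of 1 0] gen[of 0 1] part3 unfolding a1 b1 by simp
qed

end
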